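(* Let $\triangle$ be an apexed triangle and $f_\triangle:\mathbb{R}^2\to\mathbb{R}$ the associated distance function. Then for all $x_1,x_2\in\mathbb{R}^2$, $|f_\triangle(x_1)-f_\triangle(x_2)|\le\|x_1-x_2\|$.
   Context: $\|\cdot\|$ is the Euclidean norm and $\langle\cdot,\cdot\rangle$ the Euclidean inner product in $\mathbb{R}^2$. An apexed triangle $\triangle$ (in a simple polygon $P$ with sites $S$ and geodesic distance $d$) is a triangle with corners $a$ (apex), $b,c$ (so $0<\angle bac<\pi$), together with a site $s$ (definer); only $a,b,c$ and the constant $d(a,s)$ matter here. Let $u_1=(b-a)/\|b-a\|$ and $u_2=(c-a)/\|c-a\|$. Let $R_{in}=\{a+\lambda u_1+\mu u_2:\lambda,\mu\ge0\}$. Let $L=\{x\notin R_{in}:\langle x-a,u_1\rangle\ge\langle x-a,u_2\rangle\}$ and $R=\{x\notin R_{in}:\langle x-a,u_2\rangle>\langle x-a,u_1\rangle\}$ (so $L$ and $R$ are separated by the halfline from $a$ bisecting the angle at $a$ that points away from $\triangle$). Split $L$ into $L_{top}=\{x\in L:\langle x-a,u_1\rangle<0\}$ and $L_{side}=L\setminus L_{top}$, and similarly $R_{top}=\{x\in R:\langle x-a,u_2\rangle<0\}$, $R_{side}=R\setminus R_{top}$. For $x\in L$ let $\hat x$ be the orthogonal projection of $x$ onto the line through $a$ with direction $u_1$; for $x\in R$ let $\hat x$ be the orthogonal projection onto the line through $a$ with direction $u_2$; for $x\in R_{in}$ let $\hat x=x$. Define $f_\triangle(x)=d(a,s)-\|\hat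 x-a\|$ if $x\in L_{top}\cup R_{top}$, and $f_\triangle(x)=d(a,s)+\|\hat x-a\|$ otherwise. *)

theory Defs
  imports "HOL-Analysis.Analysis"
begin

text \<open>Points of the plane are vectors of type real^2. An apexed triangle is given by
its apex a, corners b c, and the constant D = d(a,s) (geodesic distance from the apex
to the definer site).\<close>

definition angle_at :: "real^2 \<Rightarrow> real^2 \<Rightarrow> real^2 \<Rightarrow> real" where
  "angle_at b a c = arccos (((b - a) \<bullet> (c - a)) / (norm (b - a) * norm (c - a)))"

definition dir1 :: "real^2 \<Rightarrow> real^2 \<Rightarrow> real^2" where
  "dir1 a b = (1 / norm (b - a)) *\<^sub>R (b - a)"

definition Rin :: "real^2 \<Rightarrow> real^2 \<Rightarrow> real^2 \<Rightarrow> (real^2) set" where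
  "Rin a b c = {a + l *\<^sub>R dir1 a b + m *\<^sub>R dir1 a c | l m. l \<ge> 0 \<and> m \<ge> 0}"

definition Lreg :: "real^2 \<Rightarrow> real^2 \<Rightarrow> real^2 \<Rightarrow> (real^2) set" where
  "Lreg a b c = {x. x \<notin> Rin a b c \<and> (x - a) \<bullet> dir1 a b \<ge> (x - a) \<bullet> dir1 a c}"

definition Rreg :: "real^2 \<Rightarrow> real^2 \<Rightarrow> real^2 \<Rightarrow> (real^2) set" where
  "Rreg a b c = {x. x \<notin> Rin a b c \<and> (x - a) \<bullet> dir1 a c > (x - a) \<bullet> dir1 a b}"

definition Ltop :: "real^2 \<Rightarrow> real^2 \<Rightarrow> real^2 \<Rightarrow> (real^2) set" where
  "Ltop a b c = {x \<in> Lreg a b c. (x - a) \<bullet> dir1 a b < 0}"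

definition Rtop :: "real^2 \<Rightarrow> real^2 \<Rightarrow> real^2 \<Rightarrow> (real^2) set" where
  "Rtop a b c = {x \<in> Rreg a b c. (x - a) \<bullet> dir1 a c < 0}"

definition proj_line :: "real^2 \<Rightarrow> real^2 \<Rightarrow> real^2 \<Rightarrow> real^2" where
  "proj_line a u x = a + ((x - a) \<bullet> u) *\<^sub>R u"

definition hat :: "real^2 \<Rightarrow> real^2 \<Rightarrow> real^2 \<Rightarrow> real^2 \<Rightarrow> real^2" where
  "hat a b c x =
     (if x \<in> Lreg a b c then proj_line a (dir1 a b) x
      else if x \<in> Rreg a b c then proj_line a (dir1 a c) x
      else x)"

definition f_tri :: "real^2 \<Rightarrow> real^2 \<Rightarrow> real^2 \<Rightarrow> real \<Rightarrow> real^2 \<Rightarrow> real" where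
  "f_tri a b c D x =
     (if x \<in> Ltop a b c \<union> Rtop a b c then D - norm (hat a b c x - a)
      else D + norm (hat a b c x - a))"

end

theory Submission
  imports Defs
begin

lemma unit_decomp:
  fixes u v z :: "real^2"
  assumes "norm u = 1" "norm v = 1" "u \<bullet> v < 1" "u \<bullet> v > -1"
  shows "\<exists>p q. z = p *\<^sub>R u + q *\<^sub>R v"
proof -
  define d where "d = (u$1)*(v$2) - (u$2)*(v$1)"
  have "u \<bullet> u = 1" using assms(1) by (simp add: norm_eq_1)
  hence uu: "(u$1)*(u$1) + (u$2)*(u$2) = 1" by (simp add: inner_vec_def sum_2)
  have "v \<bullet> v = 1" using assms(2) by (simp add: norm_eq_1)
  hence vv: "(v$1)*(v$1) + (v$2)*(v$2) = 1" by (simp add: inner_vec_def sum_2)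
  have uv: "u \<bullet> v = (u$1)*(v$1) + (u$2)*(v$2)" by (simp add: inner_vec_def sum_2)
  have lag: "((u$1)*(u$1) + (u$2)*(u$2))*((v$1)*(v$1) + (v$2)*(v$2)) = (u \<bullet> v)^2 + d^2"
    unfolding uv d_def by (simp add: algebra_simps power2_eq_square)
  have "(u \<bullet> v)^2 < 1" using assms(3,4)
    by (simp add: abs_square_less_1)
  moreover have "(u \<bullet> v)^2 + d^2 = 1" using lag uu vv by simp
  ultimately have "d^2 > 0" by linarith
  hence d0: "d \<noteq> 0" by auto
  define p where "p = ((z$1)*(v$2) - (z$2)*(v$1))/d"
  define q where "q = ((u$1)*(z$2) - (u$2)*(z$1))/d"
  have e1: "((z$1)*(v$2) - (z$2)*(v$1))*(u$1) + ((u$1)*(z$2) - (u$2)*(z$1))*(v$1) = (z$1)*d"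
    by (simp add: d_def algebra_simps)
  have e2: "((z$1)*(v$2) - (z$2)*(v$1))*(u$2) + ((u$1)*(z$2) - (u$2)*(z$1))*(v$2) = (z$2)*d"
    by (simp add: d_def algebra_simps)
  have c1: "p*(u$1) + q*(v$1) = z$1" unfolding p_def q_def using e1 d0
    by (simp add: field_simps)
  have c2: "p*(u$2) + q*(v$2) = z$2" unfolding p_def q_def using e2 d0
    by (simp add: field_simps)
  have "z = p *\<^sub>R u + q *\<^sub>R v"
    unfolding vec_eq_iff forall_2 using c1 c2 by simp
  thus ?thesis by blast
qed


definition cone :: "real^2 \<Rightarrow> real^2 \<Rightarrow> (real^2) set" where
  "cone u v = {l *\<^sub>R u + m *\<^sub>R v | l m. l \<ge> 0 \<and> m \<ge> 0}"

lemma cone_sym: "cone u v = cone v u"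
proof -
  have "x \<in> cone v u" if h: "x \<in> cone u v" for x u v :: "real^2"
  proof -
    obtain l m where "x = l *\<^sub>R u + m *\<^sub>R v" "l \<ge> 0" "m \<ge> 0" using h unfolding cone_def by blast
    hence "x = m *\<^sub>R v + l *\<^sub>R u \<and> m \<ge> 0 \<and> l \<ge> 0" by simp
    thus ?thesis unfolding cone_def by blast
  qed
  thus ?thesis by blast
qed

lemma key:
  fixes u v w z :: "real^2"
  assumes nu: "norm u = 1" and nv: "norm v = 1" and k1: "u \<bullet> v < 1" and k2: "u \<bullet> v > -1"
    and w: "w = la *\<^sub>R u + mu *\<^sub>R v" and la: "la \<ge> 0" and mu: "mu \<ge> 0" and nw: "norm w = 1"
    and z: "z \<notin> cone u v" and zz: "z \<bullet> u \<ge> z \<bullet> v"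
  shows "z \<bullet> w \<le> z \<bullet> u"
proof -
  define k where "k = u \<bullet> v"
  obtain p q where pq: "z = p *\<^sub>R u + q *\<^sub>R v" using unit_decomp[OF nu nv k1 k2] by blast
  have uu: "u \<bullet> u = 1" using nu by (simp add: norm_eq_1)
  have vv: "v \<bullet> v = 1" using nv by (simp add: norm_eq_1)
  have vu: "v \<bullet> u = k" by (simp add: k_def inner_commute)
  have zu: "z \<bullet> u = p + q*k" using uu vu by (simp add: pq inner_add_left k_def)
  have zv: "z \<bullet> v = p*k + q" using vv by (simp add: pq inner_add_left k_def)
  have zw: "z \<bullet> w = la*(p+q*k) + mu*(p*k+q)" using zu zv by (simp add: w inner_add_right)
  have "(p-q)*(1-k) \<ge> 0" using zz zu zv by (simp add: algebra_simps)
  hence pq1: "p \<ge> q" using k1 k_def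
    by (metis diff_ge_0_iff_ge diff_gt_0_iff_gt zero_le_mult_iff not_less)
  have "\<not> (p \<ge> 0 \<and> q \<ge> 0)" using z pq unfolding cone_def by blast
  hence q0: "q < 0" using pq1 by linarith
  have wu: "w \<bullet> u = la + mu*k" using uu vu by (simp add: w inner_add_left)
  have "w \<bullet> u \<le> norm w * norm u" by (rule norm_cauchy_schwarz)
  hence A: "la + mu*k \<le> 1" using wu nw nu by simp
  have "norm w \<le> norm (la *\<^sub>R u) + norm (mu *\<^sub>R v)" unfolding w by (rule norm_triangle_ineq)
  hence B: "la + mu \<ge> 1" using nw nu nv la mu by simp
  have id: "z \<bullet> w - z \<bullet> u = (p-q)*(la+mu*k-1) + q*(1+k)*(la+mu-1)"
    unfolding zw zu by (simp add: algebra_simps)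
  have t1: "(p-q)*(la+mu*k-1) \<le> 0" using pq1 A by (simp add: mult_nonneg_nonpos)
  have "(1+k)*(la+mu-1) \<ge> 0" using k2 B k_def by simp
  hence t2: "q*((1+k)*(la+mu-1)) \<le> 0" using q0 by (simp add: mult_nonpos_nonneg)
  show ?thesis using id t1 t2 by (simp add: mult.assoc)
qed

definition G :: "real^2 \<Rightarrow> real^2 \<Rightarrow> real^2 \<Rightarrow> real" where
  "G u v z = (if z \<in> cone u v then norm z else max (z \<bullet> u) (z \<bullet> v))"

lemma below:
  fixes u v w y :: "real^2"
  assumes nu: "norm u = 1" and nv: "norm v = 1" and k1: "u \<bullet> v < 1" and k2: "u \<bullet> v > -1"
    and w: "w = la *\<^sub>R u + mu *\<^sub>R v" and la: "la \<ge> 0" and mu: "mu \<ge> 0" and nw: "norm w = 1"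
  shows "y \<bullet> w \<le> G u v y"
proof (cases "y \<in> cone u v")
  case True
  have "y \<bullet> w \<le> norm y * norm w" by (rule norm_cauchy_schwarz)
  thus ?thesis using True nw by (simp add: G_def)
next
  case False
  show ?thesis
  proof (cases "y \<bullet> u \<ge> y \<bullet> v")
    case True
    have "y \<bullet> w \<le> y \<bullet> u" by (rule key[OF nu nv k1 k2 w la mu nw False True])
    thus ?thesis using False by (simp add: G_def)
  next
    case F2: False
    have k1': "v \<bullet> u < 1" and k2': "v \<bullet> u > -1" using k1 k2 by (auto simp: inner_commute)
    have w': "w = mu *\<^sub>R v + la *\<^sub>R u" using w by simp
    have "y \<bullet> w \<le> y \<bullet> v" 
      by (rule key[OF nv nu k1' k2' w' mu la nw]) (use False F2 cone_sym in auto)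
    thus ?thesis using False by (simp add: G_def)
  qed
qed

lemma witness:
  fixes u v x :: "real^2"
  assumes nu: "norm u = 1" and nv: "norm v = 1"
  shows "\<exists>w la mu. w = la *\<^sub>R u + mu *\<^sub>R v \<and> la \<ge> 0 \<and> mu \<ge> 0 \<and> norm w = 1 \<and> G u v x = x \<bullet> w"
proof (cases "x \<in> cone u v")
  case True
  then obtain l m where lm: "x = l *\<^sub>R u + m *\<^sub>R v" "l \<ge> 0" "m \<ge> 0" unfolding cone_def by blast
  show ?thesis
  proof (cases "x = 0")
    case True
    thus ?thesis using nu True \<open>x \<in> cone u v\<close> by (intro exI[of _ u] exI[of _ 1] exI[of _ 0]) (simp add: G_def)
  next
    case False
    define n where "n = norm x"
    have n0: "n > 0" using False n_def by simp
    have "(1/n) *\<^sub>R x = (l/n) *\<^sub>R u + (m/n) *\<^sub>R v" using lm by (simp add: scaleR_add_right)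
    moreover have "norm ((1/n) *\<^sub>R x) = 1" using n0 n_def by simp
    moreover have "G u v x = x \<bullet> ((1/n) *\<^sub>R x)" using True n0 n_def
      by (simp add: G_def dot_square_norm power2_eq_square)
    ultimately show ?thesis using lm n0
      by (intro exI[of _ "(1/n) *\<^sub>R x"] exI[of _ "l/n"] exI[of _ "m/n"]) simp
  qed
next
  case False
  show ?thesis
  proof (cases "x \<bullet> u \<ge> x \<bullet> v")
    case True
    thus ?thesis using False nu
      by (intro exI[of _ u] exI[of _ 1] exI[of _ 0]) (simp add: G_def)
  next
    case F2: False
    thus ?thesis using False nv
      by (intro exI[of _ v] exI[of _ 0] exI[of _ 1]) (simp add: G_def)
  qed
qed

lemma G_lip:
  fixes u v x y :: "real^2"
  assumes nu: "norm u = 1" and nv: "norm v = 1" and k1: "u \<bullet> v < 1" and k2: "u \<bullet> v > -1"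
  shows "G u v x - G u v y \<le> norm (x - y)"
proof -
  obtain w la mu where W: "w = la *\<^sub>R u + mu *\<^sub>R v" "la \<ge> 0" "mu \<ge> 0" "norm w = 1" "G u v x = x \<bullet> w"
    using witness[OF nu nv] by blast
  have "y \<bullet> w \<le> G u v y" by (rule below[OF nu nv k1 k2 W(1-4)])
  moreover have "(x - y) \<bullet> w \<le> norm (x - y) * norm w" by (rule norm_cauchy_schwarz)
  ultimately show ?thesis using W by (simp add: inner_diff_left)
qed

theorem mainTheorem8:
  fixes a b c x1 x2 :: "real^2" and D :: real
  assumes "b \<noteq> a" and "c \<noteq> a"
    and "0 < angle_at b a c" and "angle_at b a c < pi"
    and "0 \<le> D"
  shows "\<bar>f_tri a b c D x1 - f_tri a b c D x2\<bar> \<le> norm (x1 - x2)"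
proof -
  define u where "u = dir1 a b"
  define v where "v = dir1 a c"
  have nu: "norm u = 1" using assms(1) by (simp add: u_def dir1_def)
  have nv: "norm v = 1" using assms(2) by (simp add: v_def dir1_def)
  have kv: "((b - a) \<bullet> (c - a)) / (norm (b - a) * norm (c - a)) = u \<bullet> v"
    by (simp add: u_def v_def dir1_def)
  have "\<bar>u \<bullet> v\<bar> \<le> 1" using Cauchy_Schwarz_ineq2[of u v] nu nv by simp
  moreover have "u \<bullet> v \<noteq> 1" using assms(3) kv unfolding angle_at_def by auto
  moreover have "u \<bullet> v \<noteq> -1" using assms(4) kv unfolding angle_at_def by auto
  ultimately have k1: "u \<bullet> v < 1" and k2: "u \<bullet> v > -1" by auto
  have Rin: "x \<in> Rin a b c \<longleftrightarrow> x - a \<in> cone u v" for x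
    unfolding Rin_def cone_def u_def v_def by (auto simp: algebra_simps)
  have f: "f_tri a b c D x = D + G u v (x - a)" for x
  proof -
    have pu: "norm (proj_line a u x - a) = \<bar>(x - a) \<bullet> u\<bar>" using nu by (simp add: proj_line_def)
    have pv: "norm (proj_line a v x - a) = \<bar>(x - a) \<bullet> v\<bar>" using nv by (simp add: proj_line_def)
    show ?thesis
      unfolding f_tri_def hat_def Ltop_def Rtop_def Lreg_def Rreg_def G_def
      using pu pv Rin[of x] unfolding u_def[symmetric] v_def[symmetric]
      by (auto simp: max_def)
  qed
  show ?thesis using G_lip[OF nu nv k1 k2, of "x1 - a" "x2 - a"] G_lip[OF nu nv k1 k2, of "x2 - a" "x1 - a"]
    by (simp add: f norm_minus_commute)
qed

end
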